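(* Let $n\geq 10^6$ and let $K_{2n+1}$ be ND-coloured. Let $T$ be a tree on $n+1$ vertices containing a vertex $v_1$ which is adjacent to at least $2n/3$ leaves. Then $K_{2n+1}$ contains a rainbow copy of $T$.
   Context: The ND-colouring of $K_{2n+1}$: vertex set $\{0,1,\dots,2n\}$, and the edge $ij$ receives colour $k\in\{1,\dots,n\}$ where $i-j\equiv \pm k \pmod{2n+1}$. A subgraph is rainbow if all its edges have distinct colours. *)

theory Defs
  imports Main
begin

definition simple_graph :: "'a set \<Rightarrow> 'a set set \<Rightarrow> bool" where
  "simple_graph V E \<longleftrightarrow> finite V \<and> (\<forall>e\<in>E. e \<subseteq> V \<and> card e = 2)"

definition adj :: "'a set set \<Rightarrow> 'a \<Rightarrow> 'a \<Rightarrow> bool" where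
  "adj E u v \<longleftrightarrow> {u, v} \<in> E"

definition connected_graph :: "'a set \<Rightarrow> 'a set set \<Rightarrow> bool" where
  "connected_graph V E \<longleftrightarrow> (\<forall>u\<in>V. \<forall>v\<in>V. (adj E)\<^sup>*\<^sup>* u v)"

definition is_tree :: "'a set \<Rightarrow> 'a set set \<Rightarrow> bool" where
  "is_tree V E \<longleftrightarrow> simple_graph V E \<and> V \<noteq> {} \<and> connected_graph V E
     \<and> card E + 1 = card V"

definition degree :: "'a set set \<Rightarrow> 'a \<Rightarrow> nat" where
  "degree E v = card {e \<in> E. v \<in> e}"

definition leaves_at :: "'a set set \<Rightarrow> 'a \<Rightarrow> 'a set" where
  "leaves_at E v = {u. {v, u} \<in> E \<and> degree E u = 1}"

text \<open>ND-colouring of K_{2n+1} on vertex set {0..2n}: edge ij gets colour k in {1..n}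
  with i - j = +-k (mod 2n+1).\<close>
definition nd_colour :: "nat \<Rightarrow> nat \<Rightarrow> nat \<Rightarrow> nat" where
  "nd_colour n i j =
     (let d = (int i - int j) mod int (2*n+1)
      in nat (min d (int (2*n+1) - d)))"

definition rainbow_copy :: "nat \<Rightarrow> 'a set \<Rightarrow> 'a set set \<Rightarrow> ('a \<Rightarrow> nat) \<Rightarrow> bool" where
  "rainbow_copy n V E f \<longleftrightarrow>
     f ` V \<subseteq> {0..2*n} \<and> inj_on f V \<and>
     (\<forall>u v x y. {u, v} \<in> E \<and> {x, y} \<in> E \<and> {u, v} \<noteq> {x, y} \<longrightarrow>
        nd_colour n (f u) (f v) \<noteq> nd_colour n (f x) (f y))"

end

theory Submission
  imports Defs
begin


lemma nd1: assumes "i \<le> n" "j \<le> n"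
  shows "nd_colour n i j = (if i \<le> j then j - i else i - j)"
proof (cases "i \<le> j")
  case True
  have m: "(int i - int j) mod int (2*n+1) = (if i = j then 0 else int i - int j + int (2*n+1))"
  proof (cases "i = j")
    case False
    have "(int i - int j) mod int (2*n+1) = (int i - int j + int (2*n+1)) mod int (2*n+1)" by simp
    also have "\<dots> = int i - int j + int (2*n+1)" using True False assms by (intro mod_pos_pos_trivial) auto
    finally show ?thesis using False by simp
  qed simp
  show ?thesis using True assms unfolding nd_colour_def Let_def m by auto
next
  case False
  have m: "(int i - int j) mod int (2*n+1) = int i - int j" using False assms by (intro mod_pos_pos_trivial) auto
  show ?thesis using False assms unfolding nd_colour_def Let_def m by auto
qed

lemma nd2: assumes "1 \<le> c" "c \<le> n"
  shows "nd_colour n 0 (2*n+1-c) = c" "nd_colour n (2*n+1-c) 0 = c"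
proof -
  have e: "int 0 - int (2*n+1-c) = int c + (-1) * int (2*n+1)"
    using assms by (simp add: of_nat_diff)
  have "(int 0 - int (2*n+1-c)) mod int (2*n+1) = (int c + (-1) * int (2*n+1)) mod int (2*n+1)"
    by (simp only: e)
  also have "\<dots> = int c mod int (2*n+1)" by (simp only: mod_mult_self1)
  also have "\<dots> = int c" using assms by (intro mod_pos_pos_trivial) auto
  finally have m: "(int 0 - int (2*n+1-c)) mod int (2*n+1) = int c" .
  show "nd_colour n 0 (2*n+1-c) = c" unfolding nd_colour_def Let_def m using assms by auto
  have m2: "(int (2*n+1-c) - int 0) mod int (2*n+1) = int (2*n+1-c)" using assms by (simp only: diff_zero of_nat_0, intro mod_pos_pos_trivial) auto
  show "nd_colour n (2*n+1-c) 0 = c" unfolding nd_colour_def Let_def m2 using assms by auto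
qed



definition Ein :: "'a set set \<Rightarrow> 'a set \<Rightarrow> 'a set set" where
  "Ein E S = {e\<in>E. e \<subseteq> S}"

definition ecol :: "('a \<Rightarrow> nat) \<Rightarrow> 'a set \<Rightarrow> nat" where
  "ecol f e = Max (f ` e) - Min (f ` e)"

lemma ecol2: "ecol f {a,b} = (if f a \<le> f b then f b - f a else f a - f b)"
  unfolding ecol_def by (auto simp: max_def min_def)

lemma finE: assumes "simple_graph V E" shows "finite E"
proof -
  have "E \<subseteq> Pow V" using assms unfolding simple_graph_def by auto
  moreover have "finite V" using assms unfolding simple_graph_def by auto
  ultimately show ?thesis by (meson finite_Pow_iff finite_subset)
qed

lemma cross:
  assumes "simple_graph V E" "connected_graph V E" "v \<in> S" "S \<subseteq> V" "x \<in> V" "x \<notin> S"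
  shows "\<exists>u w. u \<in> S \<and> w \<in> V \<and> w \<notin> S \<and> {u,w} \<in> E"
proof -
  have r: "(adj E)\<^sup>*\<^sup>* v x" using assms unfolding connected_graph_def by auto
  have "\<And>y. (adj E)\<^sup>*\<^sup>* v y \<Longrightarrow> y \<in> S \<or> (\<exists>u w. u \<in> S \<and> w \<in> V \<and> w \<notin> S \<and> {u,w} \<in> E)"
  proof -
    fix y assume "(adj E)\<^sup>*\<^sup>* v y"
    then show "y \<in> S \<or> (\<exists>u w. u \<in> S \<and> w \<in> V \<and> w \<notin> S \<and> {u,w} \<in> E)"
    proof (induction rule: rtranclp_induct)
      case base then show ?case using assms by simp
    next
      case (step y z)
      show ?case
      proof (cases "z \<in> S")
        case False
        have "{y,z} \<in> E" using step(2) unfolding adj_def .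
        hence "z \<in> V" using assms(1) unfolding simple_graph_def by auto
        then show ?thesis using step False \<open>{y,z} \<in> E\<close> by blast
      qed simp
    qed
  qed
  from this[OF r] show ?thesis using assms by blast
qed

lemma lemA:
  assumes "simple_graph V E" "connected_graph V E" "v \<in> S" "S \<subseteq> V"
  shows "card (Ein E S) + (card V - card S) \<le> card E"
  using assms(3,4)
proof (induction "card (V - S)" arbitrary: S)
  case 0
  have fV: "finite V" using assms unfolding simple_graph_def by auto
  hence "S = V" using 0 by auto
  have "Ein E S \<subseteq> E" unfolding Ein_def by auto
  then show ?case using card_mono[OF finE[OF assms(1)]] \<open>S = V\<close> by simp
next
  case (Suc m)
  have fV: "finite V" using assms unfolding simple_graph_def by auto
  obtain x where x: "x \<in> V" "x \<notin> S" using Suc(2) by (metis Diff_eq_empty_iff card.empty nat.distinct(1) Suc(4) subset_antisym subsetI)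
  obtain u w where uw: "u \<in> S" "w \<in> V" "w \<notin> S" "{u,w} \<in> E"
    using cross[OF assms(1,2) Suc(3,4) x] by blast
  have m: "m = card (V - insert w S)" using Suc(2) uw fV
    by (metis Diff_insert card_Diff_singleton DiffI diff_Suc_1 finite_Diff)
  have IH: "card (Ein E (insert w S)) + (card V - card (insert w S)) \<le> card E"
    using Suc(1)[OF m] Suc(3,4) uw by auto
  have fS: "finite S" using Suc(4) fV finite_subset by blast
  have "insert {u,w} (Ein E S) \<subseteq> Ein E (insert w S)" using uw unfolding Ein_def by auto
  moreover have "{u,w} \<notin> Ein E S" using uw unfolding Ein_def by auto
  moreover have "finite (Ein E (insert w S))" using finE[OF assms(1)] unfolding Ein_def by auto
  moreover have "finite (Ein E S)" using finE[OF assms(1)] unfolding Ein_def by auto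
  ultimately have "card (Ein E S) + 1 \<le> card (Ein E (insert w S))"
    by (metis Suc_eq_plus1 card_insert_disjoint card_mono)
  moreover have "card (insert w S) = card S + 1" using fS uw by simp
  moreover have "card (insert w S) \<le> card V" using uw Suc(4) fV by (intro card_mono) auto
  ultimately show ?case using IH by linarith
qed

lemma leafE:
  assumes "simple_graph V E" "{a,b} \<in> E" "b \<in> leaves_at E v1"
  shows "a = v1"
proof -
  have l: "{v1,b} \<in> E" "card {e\<in>E. b \<in> e} = 1" using assms(3) unfolding leaves_at_def degree_def by auto
  have "{a,b} = {v1,b}" using l assms(2) by (metis (mono_tags, lifting) card_1_singletonE insertCI mem_Collect_eq singletonD)
  moreover have "a \<noteq> b" using assms(1,2) unfolding simple_graph_def by fastforce
  ultimately show ?thesis by (metis doubleton_eq_iff)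
qed

lemma v1_notin: assumes "simple_graph V E" shows "v1 \<notin> leaves_at E v1"
  using assms unfolding leaves_at_def simple_graph_def by fastforce

lemma leaves_sub: assumes "simple_graph V E" shows "leaves_at E v1 \<subseteq> V"
  using assms unfolding leaves_at_def simple_graph_def by fastforce




definition good where
  "good E n v1 W k T f \<longleftrightarrow> v1\<in>T \<and> T \<subseteq> W \<and> card T = Suc k \<and> card (Ein E T) = k \<and> inj_on f T
     \<and> f`T \<subseteq> {..n} \<and> f v1 = 0 \<and> (\<forall>e1\<in>Ein E T. \<forall>e2\<in>Ein E T. e1 \<noteq> e2 \<longrightarrow> ecol f e1 \<noteq> ecol f e2)"

lemma step:
  assumes sg: "simple_graph V E" and cg: "connected_graph V E" and ce: "card E + 1 = card V"
    and v1: "v1 \<in> V" and Wd: "W = V - leaves_at E v1" and bd: "3 * (card W - 1) \<le> n"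
    and k: "Suc (Suc k) \<le> card W" and g: "good E n v1 W k T f"
  shows "\<exists>T' f'. good E n v1 W (Suc k) T' f'"
proof -
  define Lv where "Lv = leaves_at E v1"
  have fV: "finite V" using sg unfolding simple_graph_def by auto
  have fE: "finite E" using finE[OF sg] .
  have LvV: "Lv \<subseteq> V" using leaves_sub[OF sg] unfolding Lv_def .
  have fLv: "finite Lv" using LvV fV finite_subset by blast
  have v1L: "v1 \<notin> Lv" using v1_notin[OF sg] unfolding Lv_def .
  have fW: "finite W" using Wd fV by simp
  have g1: "v1\<in>T" "T \<subseteq> W" "card T = Suc k" "card (Ein E T) = k" "inj_on f T"
     "f`T \<subseteq> {..n}" "f v1 = 0" "\<forall>e1\<in>Ein E T. \<forall>e2\<in>Ein E T. e1 \<noteq> e2 \<longrightarrow> ecol f e1 \<noteq> ecol f e2"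
    using g unfolding good_def by auto
  have fT: "finite T" using g1(2) fW finite_subset by blast
  have "T \<noteq> W" using g1(3) k by auto
  then obtain x where x: "x \<in> W" "x \<notin> T" using g1(2) by blast
  define S where "S = T \<union> Lv"
  have xS: "x \<notin> S" "x \<in> V" using x Wd unfolding S_def Lv_def by auto
  have SV: "S \<subseteq> V" "v1 \<in> S" using g1(1,2) Wd LvV unfolding S_def by auto
  obtain u w where uw: "u \<in> S" "w \<in> V" "w \<notin> S" "{u,w} \<in> E"
    using cross[OF sg cg SV(2,1) xS(2,1)] by blast
  have uT: "u \<in> T"
  proof (rule ccontr)
    assume "u \<notin> T"
    hence "u \<in> Lv" using uw unfolding S_def by auto
    moreover have "{w,u} \<in> E" using uw by (simp add: insert_commute)
    ultimately have "w = v1" using leafE[OF sg] unfolding Lv_def by blast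
    thus False using uw SV by auto
  qed
  have wW: "w \<in> W" "w \<notin> T" "w \<notin> Lv" using uw Wd unfolding S_def Lv_def by auto
  define Fb where "Fb = f`T \<union> (\<lambda>e. f u + ecol f e)`Ein E T \<union> (\<lambda>e. f u - ecol f e)`Ein E T"
  have fEin: "finite (Ein E X)" for X using fE unfolding Ein_def by auto
  have "card Fb \<le> card T + card (Ein E T) + card (Ein E T)"
    unfolding Fb_def
    by (meson add_mono card_Un_le card_image_le fEin fT le_trans)
  hence cFb: "card Fb \<le> 3 * k + 1" using g1(3,4) by simp
  have "3 * k + 1 < n + 1" using bd k by linarith
  obtain p where p: "p \<le> n" "p \<notin> Fb"
  proof (rule ccontr)
    assume "\<not> thesis"
    hence "{..n} \<subseteq> Fb" using that by auto
    moreover have "finite Fb" unfolding Fb_def using fT fEin by auto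
    ultimately have "card {..n} \<le> card Fb" by (rule card_mono[rotated])
    thus False using cFb \<open>3 * k + 1 < n + 1\<close> by simp
  qed
  define f' where "f' = f(w := p)"
  define T' where "T' = insert w T"
  have ein_eq: "Ein E T' = insert {u,w} (Ein E T)"
  proof (rule ccontr)
    assume ne: "Ein E T' \<noteq> insert {u,w} (Ein E T)"
    have sub: "insert {u,w} (Ein E T) \<subseteq> Ein E T'" using uw uT unfolding Ein_def T'_def by auto
    then obtain e where e: "e \<in> Ein E T'" "e \<notin> insert {u,w} (Ein E T)" using ne by blast
    have "insert e (insert {u,w} (Ein E T)) \<subseteq> Ein E T'" using sub e by auto
    moreover have "{u,w} \<notin> Ein E T" using wW unfolding Ein_def by auto
    ultimately have c1: "k + 2 \<le> card (Ein E T')" using e g1(4)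
      by (metis (no_types, lifting) add_2_eq_Suc' card_insert_disjoint card_mono fEin finite_insert)
    define S' where "S' = T' \<union> Lv"
    define LE where "LE = (\<lambda>y. {v1,y}) ` Lv"
    have LEsub: "LE \<subseteq> Ein E S'" unfolding LE_def S'_def Ein_def Lv_def leaves_at_def T'_def
      using g1(1) by auto
    have dis: "LE \<inter> Ein E T' = {}"
    proof -
      have "T' \<subseteq> W" using g1(2) wW unfolding T'_def by auto
      thus ?thesis unfolding LE_def Ein_def using Wd unfolding Lv_def by auto
    qed
    have injLE: "inj_on (\<lambda>y. {v1,y}) Lv" using v1L unfolding inj_on_def by (metis doubleton_eq_iff)
    have cLE: "card LE = card Lv" unfolding LE_def using card_image[OF injLE] .
    have "Ein E T' \<subseteq> Ein E S'" unfolding Ein_def S'_def by auto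
    hence "Ein E T' \<union> LE \<subseteq> Ein E S'" using LEsub by auto
    hence "card (Ein E T' \<union> LE) \<le> card (Ein E S')" using fEin by (intro card_mono) auto
    moreover have "card (Ein E T' \<union> LE) = card (Ein E T') + card LE"
      using dis fEin fLv unfolding LE_def by (intro card_Un_disjoint) auto
    ultimately have c2: "k + 2 + card Lv \<le> card (Ein E S')" using c1 cLE by linarith
    have T'W: "T' \<subseteq> W" using g1(2) wW unfolding T'_def by auto
    have cS': "card S' = Suc (Suc k) + card Lv"
    proof -
      have "T' \<inter> Lv = {}" using T'W Wd unfolding Lv_def by auto
      hence "card S' = card T' + card Lv" unfolding S'_def using fT fLv T'_def
        by (intro card_Un_disjoint) auto
      moreover have "card T' = Suc (Suc k)" unfolding T'_def using fT wW g1(3) by simp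
      ultimately show ?thesis by simp
    qed
    have S'V: "S' \<subseteq> V" "v1 \<in> S'" using T'W Wd LvV g1(1) unfolding S'_def T'_def by auto
    have "card S' \<le> card V" using S'V fV card_mono by blast
    moreover have "card (Ein E S') + (card V - card S') \<le> card E" using lemA[OF sg cg S'V(2,1)] .
    ultimately show False using c2 cS' ce by linarith
  qed
  have ecol_same: "ecol f' e = ecol f e" if "e \<in> Ein E T" for e
  proof -
    have "w \<notin> e" using that wW unfolding Ein_def by auto
    hence "f' ` e = f ` e" unfolding f'_def by auto
    thus ?thesis unfolding ecol_def by simp
  qed
  have newcol: "ecol f' {u,w} \<noteq> ecol f e" if "e \<in> Ein E T" for e
  proof
    assume a: "ecol f' {u,w} = ecol f e"
    have "f' u = f u" "f' w = p" using uT wW unfolding f'_def by auto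
    hence "p = f u + ecol f e \<or> p = f u - ecol f e" using a unfolding ecol2 by (auto split: if_splits)
    thus False using p(2) that unfolding Fb_def by auto
  qed
  have "good E n v1 W (Suc k) T' f'"
    unfolding good_def
  proof (intro conjI)
    show "v1 \<in> T'" using g1 unfolding T'_def by auto
    show "T' \<subseteq> W" using g1 wW unfolding T'_def by auto
    show "card T' = Suc (Suc k)" unfolding T'_def using fT wW g1(3) by simp
    show "card (Ein E T') = Suc k" unfolding ein_eq using wW g1(4) fEin
      by (subst card_insert_disjoint) (auto simp: Ein_def)
    show "inj_on f' T'" unfolding T'_def f'_def using g1(5) p(2) wW unfolding Fb_def
      by (auto simp: inj_on_def)
    show "f' ` T' \<subseteq> {..n}" unfolding T'_def f'_def using g1(6) p(1) wW by auto
    show "f' v1 = 0" unfolding f'_def using g1(1,7) wW by auto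
    show "\<forall>e1\<in>Ein E T'. \<forall>e2\<in>Ein E T'. e1 \<noteq> e2 \<longrightarrow> ecol f' e1 \<noteq> ecol f' e2"
      unfolding ein_eq using g1(8) ecol_same newcol by (metis insert_iff)
  qed
  thus ?thesis by blast
qed




lemma greedy:
  assumes sg: "simple_graph V E" and cg: "connected_graph V E" and ce: "card E + 1 = card V"
    and v1: "v1 \<in> V" and Wd: "W = V - leaves_at E v1" and bd: "3 * (card W - 1) \<le> n"
  shows "Suc k \<le> card W \<Longrightarrow> \<exists>T f. good E n v1 W k T f"
proof (induction k)
  case 0
  have "v1 \<in> W" using Wd v1 v1_notin[OF sg] by auto
  moreover have "Ein E {v1} = {}"
  proof -
    have "card e \<le> 1" if "e \<subseteq> {v1}" for e :: "'a set"
      using card_mono[OF _ that] by auto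
    moreover have "card e = 2" if "e \<in> E" for e using sg that unfolding simple_graph_def by auto
    ultimately have "e \<notin> E" if "e \<subseteq> {v1}" for e
      using that by (metis Suc_1 not_less_eq_eq order_refl)
    thus ?thesis unfolding Ein_def by blast
  qed
  ultimately have "good E n v1 W 0 {v1} (\<lambda>_. 0)" unfolding good_def by auto
  thus ?case by blast
next
  case (Suc k)
  then obtain T f where "good E n v1 W k T f" by auto
  from step[OF assms Suc(2) this] show ?case .
qed




theorem theorem2p3:
  fixes n :: nat and V :: "'a set" and E :: "'a set set" and v1 :: 'a
  assumes "n \<ge> 10^6"
    and "is_tree V E"
    and "card V = n + 1"
    and "v1 \<in> V"
    and "3 * card (leaves_at E v1) \<ge> 2 * n"
  shows "\<exists>f. rainbow_copy n V E f"
proof -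
  have sg: "simple_graph V E" and cg: "connected_graph V E" and ce: "card E + 1 = card V"
    using assms(2) unfolding is_tree_def by auto
  define Lv where "Lv = leaves_at E v1"
  define W where "W = V - Lv"
  have fV: "finite V" using sg unfolding simple_graph_def by auto
  have LvV: "Lv \<subseteq> V" using leaves_sub[OF sg] unfolding Lv_def .
  have fLv: "finite Lv" using LvV fV finite_subset by blast
  have v1L: "v1 \<notin> Lv" using v1_notin[OF sg] unfolding Lv_def .
  have fW: "finite W" using W_def fV by simp
  have cW: "card W + card Lv = n + 1" unfolding W_def using card_Diff_subset[OF fLv LvV] assms(3)
    card_mono[OF fV LvV] by simp
  have v1W: "v1 \<in> W" using assms(4) v1L W_def by auto
  hence cW1: "card W \<ge> 1" using fW by (metis One_nat_def Suc_leI card_gt_0_iff empty_iff)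
  have bd: "3 * (card W - 1) \<le> n" using cW assms(5) unfolding Lv_def by linarith
  obtain T f where g: "good E n v1 W (card W - 1) T f"
    using greedy[OF sg cg ce assms(4) _ bd, of "card W - 1"] W_def Lv_def cW1 by auto
  have g1: "v1\<in>T" "T \<subseteq> W" "card T = card W" "card (Ein E T) = card W - 1" "inj_on f T"
     "f`T \<subseteq> {..n}" "f v1 = 0" "\<forall>e1\<in>Ein E T. \<forall>e2\<in>Ein E T. e1 \<noteq> e2 \<longrightarrow> ecol f e1 \<noteq> ecol f e2"
    using g cW1 unfolding good_def by auto
  have TW: "T = W" using card_subset_eq[OF fW g1(2) g1(3)] .
  define UC where "UC = ecol f ` Ein E W"
  define C where "C = {1..n} - UC"
  have "card UC \<le> card (Ein E W)" unfolding UC_def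
    using finE[OF sg] by (intro card_image_le) (auto simp: Ein_def)
  hence cUC: "card UC \<le> n - card Lv" using g1(4) TW cW by simp
  have fUC: "finite UC" unfolding UC_def using finE[OF sg] by (auto simp: Ein_def)
  have "card {1..n} - card UC \<le> card C" unfolding C_def using fUC by (rule diff_card_le_card_Diff)
  moreover have "card {1..n} = n" by simp
  ultimately have "card Lv \<le> card C" using cUC cW cW1 by linarith
  then obtain g where gg: "g ` Lv \<subseteq> C" "inj_on g Lv"
    using card_le_inj[OF fLv] unfolding C_def by blast
  have grange: "1 \<le> g x" "g x \<le> n" "g x \<notin> UC" if "x \<in> Lv" for x using gg that unfolding C_def by auto
  define F where "F x = (if x \<in> Lv then 2*n+1 - g x else f x)" for x
  have fW': "f x \<le> n" if "x \<in> W" for x using g1(6) TW that by auto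
  have cls: "({a,b} \<in> Ein E W \<and> nd_colour n (F a) (F b) = ecol f {a,b}) \<or>
     (\<exists>l\<in>Lv. {a,b} = {v1,l} \<and> nd_colour n (F a) (F b) = g l)" if ab: "{a,b} \<in> E" for a b
  proof -
    have abV: "a \<in> V" "b \<in> V" using sg ab unfolding simple_graph_def by auto
    show ?thesis
    proof (cases "a \<in> Lv")
      case True
      hence "b = v1" using leafE[OF sg, of b a v1] ab unfolding Lv_def by (simp add: insert_commute)
      thus ?thesis using True nd2[OF grange(1,2)[OF True]] g1(7) v1L unfolding F_def
        by (auto simp: insert_commute)
    next
      case aL: False
      show ?thesis
      proof (cases "b \<in> Lv")
        case True
        hence "a = v1" using leafE[OF sg, of a b v1] ab unfolding Lv_def by simp
        thus ?thesis using True nd2[OF grange(1,2)[OF True]] g1(7) v1L unfolding F_def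
          by auto
      next
        case False
        have "a \<in> W" "b \<in> W" using aL False abV W_def by auto
        thus ?thesis using ab aL False nd1[OF fW' fW'] unfolding F_def Ein_def by (auto simp: ecol2)
      qed
    qed
  qed
  have "rainbow_copy n V E F"
    unfolding rainbow_copy_def
  proof (intro conjI)
    show "F ` V \<subseteq> {0..2*n}"
    proof
      fix y assume "y \<in> F ` V"
      then obtain x where x: "x \<in> V" "y = F x" by auto
      show "y \<in> {0..2*n}"
      proof (cases "x \<in> Lv")
        case True thus ?thesis using x grange[OF True] unfolding F_def by auto
      next
        case False thus ?thesis using x fW'[of x] W_def unfolding F_def by auto
      qed
    qed
    show "inj_on F V"
    proof (rule inj_onI)
      fix a b assume ab: "a \<in> V" "b \<in> V" "F a = F b"
      show "a = b"
      proof (cases "a \<in> Lv"; cases "b \<in> Lv")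
        assume "a \<in> Lv" "b \<in> Lv"
        thus ?thesis using ab grange[of a] grange[of b] gg(2) unfolding F_def inj_on_def by auto
      next
        assume "a \<in> Lv" "b \<notin> Lv"
        thus ?thesis using ab grange[of a] fW'[of b] W_def unfolding F_def by auto
      next
        assume "a \<notin> Lv" "b \<in> Lv"
        thus ?thesis using ab grange[of b] fW'[of a] W_def unfolding F_def by auto
      next
        assume "a \<notin> Lv" "b \<notin> Lv"
        thus ?thesis using ab g1(5) TW W_def unfolding F_def inj_on_def by auto
      qed
    qed
    show "\<forall>u v x y. {u, v} \<in> E \<and> {x, y} \<in> E \<and> {u, v} \<noteq> {x, y} \<longrightarrow>
        nd_colour n (F u) (F v) \<noteq> nd_colour n (F x) (F y)"
    proof (intro allI impI)
    fix u v x y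
    assume h: "{u, v} \<in> E \<and> {x, y} \<in> E \<and> {u, v} \<noteq> {x, y}"
    have ne: "{u,v} \<noteq> {x,y}" using h by blast
    have UCi: "ecol f e \<in> UC" if "e \<in> Ein E W" for e using that unfolding UC_def by auto
    have c1: "({u,v} \<in> Ein E W \<and> nd_colour n (F u) (F v) = ecol f {u,v}) \<or>
     (\<exists>l\<in>Lv. {u,v} = {v1,l} \<and> nd_colour n (F u) (F v) = g l)" using cls h by blast
    have c2: "({x,y} \<in> Ein E W \<and> nd_colour n (F x) (F y) = ecol f {x,y}) \<or>
     (\<exists>l\<in>Lv. {x,y} = {v1,l} \<and> nd_colour n (F x) (F y) = g l)" using cls h by blast
    have R: "\<And>e1 e2. e1 \<in> Ein E W \<Longrightarrow> e2 \<in> Ein E W \<Longrightarrow> e1 \<noteq> e2 \<Longrightarrow> ecol f e1 \<noteq> ecol f e2"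
      using g1(8) TW by blast
    show "nd_colour n (F u) (F v) \<noteq> nd_colour n (F x) (F y)"
    proof (cases "{u,v} \<in> Ein E W \<and> nd_colour n (F u) (F v) = ecol f {u,v}")
      case A: True
      show ?thesis
      proof (cases "{x,y} \<in> Ein E W \<and> nd_colour n (F x) (F y) = ecol f {x,y}")
        case True
        then show ?thesis using A R[of "{u,v}" "{x,y}"] ne by simp
      next
        case False
        then obtain l where l: "l \<in> Lv" "nd_colour n (F x) (F y) = g l" using c2 by blast
        show ?thesis using A UCi[of "{u,v}"] grange(3)[OF l(1)] l(2) by auto
      qed
    next
      case False
      then obtain l where l: "l \<in> Lv" "{u,v} = {v1,l}" "nd_colour n (F u) (F v) = g l" using c1 by blast
      show ?thesis
      proof (cases "{x,y} \<in> Ein E W \<and> nd_colour n (F x) (F y) = ecol f {x,y}")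
        case True
        then show ?thesis using l UCi[of "{x,y}"] grange(3)[OF l(1)] by auto
      next
        case False
        then obtain l' where l': "l' \<in> Lv" "{x,y} = {v1,l'}" "nd_colour n (F x) (F y) = g l'" using c2 by blast
        have "l \<noteq> l'" using l(2) l'(2) ne by auto
        hence "g l \<noteq> g l'" using gg(2) l(1) l'(1) unfolding inj_on_def by blast
        then show ?thesis using l(3) l'(3) by simp
      qed
    qed
    qed
  qed
  thus ?thesis by blast
qed


end
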